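(* Let $N=2$, $T>0$ and $\mathbf a(t,x_1,x_2)=(-\operatorname{sgn}x_1,0)$ (which satisfies OSLC with $\alpha\equiv0$). Then: (a) $V^T_e=\{(t,x_1,x_2)\in(0,T)\times\mathbb R^2: |x_1|<T-t\}$; (b) for every $\lambda\in\mathbb R$, the map $X^T_\lambda(t,x_1,x_2)=\bigl((|x_1|-(T-t))_+\operatorname{sgn}x_1,\ x_2+\lambda(T-t-|x_1|)_+\bigr)$ is a transport flow for $\mathbf a$, so transport flows are not unique; (c) every transport flow $X^T$ for $\mathbf a$ satisfies $J(X^T)=\mathbf 1_{|x_1|\ge T-t}$ a.e.; (d) for each $\lambda$ the family $X_\lambda(s,t,x)=\bigl((|x_1|-(s-t))_+\operatorname{sgn}x_1,\ x_2+\lambda(s-t-|x_1|)_+\bigr)$, $0\le t\le s\le T$, satisfies the semigroup property $X_\lambda(s,t,X_\lambda(t,\tau,x))=X_\lambda(s,\tau,x)$ for $0\le\tau\le t\le s\le T$.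
   Context: $\mathcal E^T$ is the set of real-valued $p\in\mathrm{Lip}_{loc}([0,T]\times\mathbb R^N)$ with $\partial_tp+\mathbf a\cdot\nabla p=0$ a.e. in $(0,T)\times\mathbb R^N$ and $p(T,\cdot)=0$; $V^T_e=\bigcup_{p\in\mathcal E^T}\{(t,x): p(t,x)\neq0\}$. A transport flow is a map $X^T\in\mathrm{Lip}([0,T]\times\mathbb R^N;\mathbb R^N)$ (globally Lipschitz) such that $\partial_tX^T+\mathbf a\cdot\nabla X^T=0$ a.e. (componentwise, spatial gradient), $X^T(T,x)=x$, and $J(X^T)=\det(\nabla X^T_1,\dots,\nabla X^T_N)\ge0$ a.e. $(z)_+=\max(z,0)$. *)

theory Defs
  imports "HOL-Analysis.Analysis"
begin

text \<open>Points of (t,x) space with N = 2 are pairs (t, (x1, x2)) :: real \<times> (real \<times> real).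
  A velocity field a is a function of t and x with values in real \<times> real.\<close>

definition locLip :: "('a::metric_space) set \<Rightarrow> ('a \<Rightarrow> 'b::metric_space) \<Rightarrow> bool" where
  "locLip S f \<longleftrightarrow> (\<forall>K. compact K \<and> K \<subseteq> S \<longrightarrow> (\<exists>C. C-lipschitz_on K f))"

text \<open>u solves d_t u + a . grad_x u = 0 almost everywhere in (0,T) x R^2
  (componentwise if u is vector valued), using the a.e. existing derivative.\<close>
definition solves_transport ::
  "real \<Rightarrow> (real \<Rightarrow> real \<times> real \<Rightarrow> real \<times> real) \<Rightarrow> (real \<times> (real \<times> real) \<Rightarrow> 'b::real_normed_vector) \<Rightarrow> bool" where
  "solves_transport T a u \<longleftrightarrow>
     (AE z in lborel. z \<in> {0<..<T} \<times> UNIV \<longrightarrow>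
        (\<exists>D. (u has_derivative D) (at z) \<and>
             D (1, (0, 0)) + fst (a (fst z) (snd z)) *\<^sub>R D (0, (1, 0))
                           + snd (a (fst z) (snd z)) *\<^sub>R D (0, (0, 1)) = 0))"

definition adjoint_class ::
  "real \<Rightarrow> (real \<Rightarrow> real \<times> real \<Rightarrow> real \<times> real) \<Rightarrow> (real \<times> (real \<times> real) \<Rightarrow> real) set" where
  "adjoint_class T a = {p. locLip ({0..T} \<times> UNIV) p \<and> solves_transport T a p \<and> (\<forall>x. p (T, x) = 0)}"

definition Ve :: "real \<Rightarrow> (real \<Rightarrow> real \<times> real \<Rightarrow> real \<times> real) \<Rightarrow> (real \<times> (real \<times> real)) set" where
  "Ve T a = (\<Union>p\<in>adjoint_class T a. {z. z \<in> {0<..<T} \<times> UNIV \<and> p z \<noteq> 0})"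

text \<open>Spatial Jacobian det(grad X1, grad X2) computed from the full derivative D of X.\<close>
definition spatial_jac :: "(real \<times> (real \<times> real) \<Rightarrow> real \<times> real) \<Rightarrow> real" where
  "spatial_jac D = fst (D (0, (1, 0))) * snd (D (0, (0, 1))) - fst (D (0, (0, 1))) * snd (D (0, (1, 0)))"

definition transport_flow ::
  "real \<Rightarrow> (real \<Rightarrow> real \<times> real \<Rightarrow> real \<times> real) \<Rightarrow> (real \<times> (real \<times> real) \<Rightarrow> real \<times> real) \<Rightarrow> bool" where
  "transport_flow T a X \<longleftrightarrow>
     (\<exists>C. C-lipschitz_on ({0..T} \<times> UNIV) X) \<and>
     solves_transport T a X \<and>
     (\<forall>x. X (T, x) = x) \<and>
     (AE z in lborel. z \<in> {0<..<T} \<times> UNIV \<longrightarrow>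
        (\<exists>D. (X has_derivative D) (at z) \<and> spatial_jac D \<ge> 0))"

definition pos_part :: "real \<Rightarrow> real" where
  "pos_part z = max z 0"

definition a_ex :: "real \<Rightarrow> real \<times> real \<Rightarrow> real \<times> real" where
  "a_ex t x = (- sgn (fst x), 0)"

definition X_lam :: "real \<Rightarrow> real \<Rightarrow> real \<Rightarrow> real \<times> real \<Rightarrow> real \<times> real" where
  "X_lam lam s t x = (pos_part (\<bar>fst x\<bar> - (s - t)) * sgn (fst x),
                      snd x + lam * pos_part (s - t - \<bar>fst x\<bar>))"

definition XT_lam :: "real \<Rightarrow> real \<Rightarrow> real \<times> (real \<times> real) \<Rightarrow> real \<times> real" where
  "XT_lam T lam z = (pos_part (\<bar>fst (snd z)\<bar> - (T - fst z)) * sgn (fst (snd z)),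
                    snd (snd z) + lam * pos_part (T - fst z - \<bar>fst (snd z)\<bar>))"

end

theory Submission
  imports Defs "HOL-Analysis.Analysis"
begin


lemma AE_negl:
  fixes P :: "'a::euclidean_space \<Rightarrow> bool"
  assumes "AE x in lborel. P x"
  obtains N where "negligible N" "\<And>x. x \<notin> N \<Longrightarrow> P x"
proof -
  from assms obtain N where N: "{x \<in> space lborel. \<not> P x} \<subseteq> N" "emeasure lborel N = 0" "N \<in> sets lborel"
    by (rule AE_E)
  then have "N \<in> null_sets lborel" by auto
  then have "N \<in> null_sets lebesgue" by (rule null_sets_completionI)
  then have "negligible N" by (simp add: negligible_iff_null_sets)
  moreover have "\<And>x. x \<notin> N \<Longrightarrow> P x" using N(1) by auto
  ultimately show ?thesis using that by blast
qed

lemma negl_AE: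
  fixes N :: "'a::euclidean_space set"
  assumes "negligible N" "\<And>x. x \<notin> N \<Longrightarrow> P x"
  shows "AE x in lborel. P x"
proof -
  have "N \<in> null_sets lebesgue" using assms(1) by (simp add: negligible_iff_null_sets)
  then have "AE x in lebesgue. x \<notin> N" by (rule AE_not_in)
  then have "AE x in lborel. x \<notin> N" by (simp add: AE_completion_iff)
  then show ?thesis by (rule AE_mp) (auto intro: assms(2))
qed

lemma negl_lin_image:
  fixes f :: "'a::euclidean_space \<Rightarrow> 'b::euclidean_space"
  assumes "linear f" "DIM('a) \<le> DIM('b)" "negligible N"
  shows "negligible (f ` N)"
  using assms by (intro negligible_differentiable_image_negligible linear_imp_differentiable_on)

lemma neg_image_deriv0:
  fixes g :: "real \<Rightarrow> real"
  assumes "\<And>t. t \<in> S \<Longrightarrow> (g has_real_derivative 0) (at t)"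
  shows "negligible (g ` S)"
proof -
  define f :: "real^1 \<Rightarrow> real^1" where "f = (\<lambda>v. vec (g (v$1)))"
  have der: "(f has_derivative (\<lambda>h. 0)) (at x within vec ` S)" if "x \<in> vec ` S" for x
  proof -
    from that obtain t where t: "t \<in> S" "x = vec t" by blast
    have z: "((*) (0::real)) = (\<lambda>_. 0)" by (rule ext) simp
    have "(g has_derivative (\<lambda>_. 0)) (at t)"
      using assms[OF t(1)] unfolding has_field_derivative_def z .
    then have "(g has_derivative (\<lambda>x. x * (\<lambda>_. 0) t)) (at t within S)"
      by (simp add: has_derivative_at_withinI)
    from has_derivative_vector_1[OF this]
    have "(f has_derivative (*\<^sub>R) 0) (at x within vec ` S)" using t by (simp add: f_def)
    moreover have "(*\<^sub>R) (0::real) = (\<lambda>h::real^1. 0)" by auto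
    ultimately show ?thesis by simp
  qed
  have "negligible (f ` (vec ` S))"
    by (rule baby_Sard[OF _ der]) (simp_all add: matrix_def flip: zero_vec_def)
  moreover have "f ` (vec ` S) = (vec :: real \<Rightarrow> real^1) ` (g ` S)" by (auto simp: f_def image_image)
  ultimately have "negligible ((vec :: real \<Rightarrow> real^1) ` (g ` S))" by simp
  then have "negligible ((\<lambda>v::real^1. v$1) ` ((vec :: real \<Rightarrow> real^1) ` (g ` S)))"
    by (rule negl_lin_image[rotated 2]) (auto intro: bounded_linear.linear bounded_linear_vec_nth)
  then show ?thesis by (simp add: image_image)
qed

lemma lip_deriv0_const:
  fixes g :: "real \<Rightarrow> real"
  assumes ab: "a < b" and lip: "C-lipschitz_on {a..b} g" and N: "negligible N"
    and der: "\<And>t. t \<in> {a<..<b} \<Longrightarrow> t \<notin> N \<Longrightarrow> (g has_real_derivative 0) (at t)"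
  shows "g a = g b"
proof (rule ccontr)
  assume ne: "g a \<noteq> g b"
  have cont: "continuous_on {a..b} g" using lip by (rule lipschitz_on_continuous_on)
  have n1: "negligible (g ` ({a<..<b} - N))" by (rule neg_image_deriv0) (use der in auto)
  have n2: "negligible (g ` ({a<..<b} \<inter> N))"
  proof (rule negligible_locally_Lipschitz_image)
    show "negligible ({a<..<b} \<inter> N)" using N by (rule negligible_subset) auto
    fix x assume x: "x \<in> {a<..<b} \<inter> N"
    show "\<exists>T B. open T \<and> x \<in> T \<and> (\<forall>y\<in>({a<..<b} \<inter> N) \<inter> T. norm (g y - g x) \<le> B * norm (y - x))"
    proof (intro exI conjI ballI)
      show "open {a<..<b}" by simp
      show "x \<in> {a<..<b}" using x by auto
      fix y assume y: "y \<in> ({a<..<b} \<inter> N) \<inter> {a<..<b}"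
      have "dist (g y) (g x) \<le> C * dist y x"
        using x y by (intro lipschitz_onD[OF lip]) auto
      then show "norm (g y - g x) \<le> C * norm (y - x)" by (simp add: dist_norm)
    qed
  qed simp
  have sub: "g ` {a..b} \<subseteq> insert (g a) (insert (g b) (g ` ({a<..<b} - N) \<union> g ` ({a<..<b} \<inter> N)))"
  proof
    fix y assume "y \<in> g ` {a..b}"
    then obtain x where x: "x \<in> {a..b}" "y = g x" by auto
    show "y \<in> insert (g a) (insert (g b) (g ` ({a<..<b} - N) \<union> g ` ({a<..<b} \<inter> N)))"
    proof (cases "x = a \<or> x = b")
      case True then show ?thesis using x by auto
    next
      case False then have "x \<in> {a<..<b}" using x by auto
      then show ?thesis using x by (cases "x \<in> N") auto
    qed
  qed
  have neg: "negligible (g ` {a..b})"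
    by (rule negligible_subset[OF _ sub]) (use n1 n2 in auto)
  have conn: "connected (g ` {a..b})" by (rule connected_continuous_image[OF cont]) simp
  have ga: "g a \<in> g ` {a..b}" and gb: "g b \<in> g ` {a..b}" using ab by auto
  have "{min (g a) (g b) <..< max (g a) (g b)} \<subseteq> g ` {a..b}"
  proof
    fix y assume "y \<in> {min (g a) (g b) <..< max (g a) (g b)}"
    then show "y \<in> g ` {a..b}"
      using connectedD_interval[OF conn ga gb] connectedD_interval[OF conn gb ga]
      by (auto simp: min_def max_def split: if_splits)
  qed
  moreover have "\<not> negligible {min (g a) (g b) <..< max (g a) (g b)}"
    by (rule open_not_negligible) (use ne in \<open>auto simp: min_def max_def\<close>)
  ultimately show False using neg negligible_subset by blast
qed

lemma locLip_cont:
  fixes u :: "'a::heine_borel \<Rightarrow> 'b::metric_space"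
  assumes "closed S" "locLip S u"
  shows "continuous_on S u"
proof (rule continuous_on_eq_continuous_within[THEN iffD2], rule ballI)
  fix x assume x: "x \<in> S"
  define K where "K = S \<inter> cball x 1"
  have "compact K" unfolding K_def using assms(1) by (intro closed_Int_compact) auto
  moreover have "K \<subseteq> S" by (auto simp: K_def)
  ultimately obtain C where "C-lipschitz_on K u" using assms(2) unfolding locLip_def by blast
  then have "continuous_on K u" by (rule lipschitz_on_continuous_on)
  moreover have "x \<in> K" using x by (auto simp: K_def)
  ultimately have "continuous (at x within K) u" by (simp add: continuous_on_eq_continuous_within)
  moreover have "at x within K = at x within S"
    by (rule at_within_nhd[where S="ball x 1"]) (auto simp: K_def)
  ultimately show "continuous (at x within S) u" by simp
qed

lemma norm_le3: "norm (p::real, (q::real, r::real)) \<le> \<bar>p\<bar> + \<bar>q\<bar> + \<bar>r\<bar>"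
proof -
  have "norm (p, (q, r)) \<le> norm p + norm (q, r)" by (rule norm_Pair_le)
  also have "norm (q, r) \<le> norm q + norm r" by (rule norm_Pair_le)
  finally show ?thesis by simp
qed

lemma char_const:
  fixes u :: "real \<times> (real \<times> real) \<Rightarrow> real" and T \<sigma> :: real
  assumes T: "T > 0" and sig: "\<sigma> = 1 \<or> \<sigma> = -1"
    and loc: "locLip ({0..T} \<times> UNIV) u"
    and pde: "AE z in lborel. z \<in> {0<..<T} \<times> UNIV \<longrightarrow>
       (\<exists>D. (u has_derivative D) (at z) \<and> D (1,(0,0)) - sgn (fst (snd z)) * D (0,(1,0)) = 0)"
    and ab: "0 \<le> a" "a \<le> b" "b \<le> T" "b \<le> y"
  shows "u (a, (\<sigma>*(y-a), x2)) = u (b, (\<sigma>*(y-b), x2))"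
proof -
  have ss: "\<sigma> * \<sigma> = 1" using sig by auto
  have cont: "continuous_on ({0..T} \<times> UNIV) u"
    by (rule locLip_cont[OF _ loc]) (simp add: closed_Times)
  define \<Phi> :: "(real \<times> real) \<times> real \<Rightarrow> real \<times> (real \<times> real)"
    where "\<Phi> = (\<lambda>(w,t). (t, (\<sigma>*(fst w - t), snd w)))"
  define \<Psi> :: "real \<times> (real \<times> real) \<Rightarrow> (real \<times> real) \<times> real"
    where "\<Psi> = (\<lambda>(t,x). ((\<sigma>*fst x + t, snd x), t))"
  have PsiPhi: "\<Psi> (\<Phi> q) = q" for q
    using ss by (cases q) (auto simp: \<Phi>_def \<Psi>_def algebra_simps)
  have linPsi: "linear \<Psi>"
    by (rule linearI) (auto simp: \<Psi>_def algebra_simps split: prod.splits)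
  obtain N where N: "negligible N" and HN: "\<And>z. z \<notin> N \<Longrightarrow> z \<in> {0<..<T} \<times> UNIV \<longrightarrow>
       (\<exists>D. (u has_derivative D) (at z) \<and> D (1,(0,0)) - sgn (fst (snd z)) * D (0,(1,0)) = 0)"
    using pde by (rule AE_negl) blast
  have "negligible (\<Psi> ` N)" by (rule negl_lin_image[OF linPsi _ N]) simp
  then have "\<Psi> ` N \<in> null_sets (completion lborel)" by (simp add: negligible_iff_null_sets)
  then obtain N'' where N'': "N'' \<in> null_sets lborel" "\<Psi> ` N \<subseteq> N''"
    unfolding null_sets_completion_iff2 by blast
  have "AE q in lborel. q \<notin> N''" using N''(1) by (rule AE_not_in)
  then have "AE q in (lborel \<Otimes>\<^sub>M lborel). q \<notin> N''" unfolding lborel_prod .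
  then have AEw: "AE w in lborel. AE t in lborel. (w, t) \<notin> N''" by (rule lborel_pair.AE_pair)
  have claim1: "u (\<Phi> (w, a')) = u (\<Phi> (w, b'))"
    if good: "AE t in lborel. (w, t) \<notin> N''" and ab': "0 < a'" "a' < b'" "b' < T" "b' < fst w" for w a' b'
  proof -
    obtain M where M: "negligible M" and HM: "\<And>t. t \<notin> M \<Longrightarrow> (w, t) \<notin> N''"
      using good by (rule AE_negl) blast
    define g where "g = (\<lambda>t. u (\<Phi> (w, t)))"
    define K where "K = (\<lambda>t. \<Phi> (w, t)) ` {a'..b'}"
    have contPhi: "continuous_on UNIV (\<lambda>t. \<Phi> (w, t))"
      unfolding \<Phi>_def by (auto intro!: continuous_intros)
    have "compact K" unfolding K_def
      by (rule compact_continuous_image[OF continuous_on_subset[OF contPhi]]) auto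
    moreover have "K \<subseteq> {0..T} \<times> UNIV" using ab' by (auto simp: K_def \<Phi>_def)
    ultimately obtain C where C: "C-lipschitz_on K u" using loc unfolding locLip_def by blast
    have lipPhi: "2-lipschitz_on {a'..b'} (\<lambda>t. \<Phi> (w, t))"
    proof (rule lipschitz_onI)
      fix s s' :: real
      have "dist (\<Phi> (w, s)) (\<Phi> (w, s')) = norm (s - s', (\<sigma> * (s' - s), 0::real))"
        by (simp add: \<Phi>_def dist_norm algebra_simps)
      also have "\<dots> \<le> \<bar>s - s'\<bar> + \<bar>\<sigma> * (s' - s)\<bar> + \<bar>0\<bar>" by (rule norm_le3)
      also have "\<bar>\<sigma> * (s' - s)\<bar> = \<bar>s - s'\<bar>" using sig by auto
      finally show "dist (\<Phi> (w, s)) (\<Phi> (w, s')) \<le> 2 * dist s s'" by (simp add: dist_real_def)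
    qed simp
    have lipg: "(C * 2)-lipschitz_on {a'..b'} g"
      unfolding g_def by (rule lipschitz_on_compose2[OF lipPhi]) (use C in \<open>simp add: K_def\<close>)
    have derg: "(g has_real_derivative 0) (at t)" if t: "t \<in> {a'<..<b'}" "t \<notin> M" for t
    proof -
      have "(w, t) \<notin> \<Psi> ` N" using HM[OF t(2)] N''(2) by blast
      then have "\<Phi> (w, t) \<notin> N" using PsiPhi by (metis image_eqI)
      moreover have "\<Phi> (w, t) \<in> {0<..<T} \<times> UNIV" using t ab' by (auto simp: \<Phi>_def)
      ultimately have "\<exists>D. (u has_derivative D) (at (\<Phi> (w, t))) \<and>
        D (1,(0,0)) - sgn (fst (snd (\<Phi> (w, t)))) * D (0,(1,0)) = 0"
        using HN[of "\<Phi> (w, t)"] by auto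
      then obtain D where D: "(u has_derivative D) (at (\<Phi> (w, t)))"
        "D (1,(0,0)) - sgn (fst (snd (\<Phi> (w, t)))) * D (0,(1,0)) = 0"
        by blast
      have sg: "sgn (fst (snd (\<Phi> (w, t)))) = \<sigma>"
        using sig t ab' by (auto simp: \<Phi>_def sgn_mult)
      have D0: "D (1,(0,0)) - \<sigma> * D (0,(1,0)) = 0" using D(2) sg by simp
      have linD: "linear D" using D(1) by (rule has_derivative_linear)
      have dPhi: "((\<lambda>t. \<Phi> (w, t)) has_derivative (\<lambda>h. (h, (-\<sigma>*h, 0)))) (at t)"
        unfolding \<Phi>_def by (auto intro!: derivative_eq_intros simp: algebra_simps)
      have "(g has_derivative (\<lambda>h. D (h, (-\<sigma>*h, 0)))) (at t)"
        unfolding g_def using has_derivative_compose[OF dPhi D(1)] by simp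
      moreover have "(\<lambda>h. D (h, (-\<sigma>*h, 0))) = (*) 0"
      proof
        fix h :: real
        have "D (h, (-\<sigma>*h, 0)) = D (h *\<^sub>R (1,(0,0)) + (-\<sigma>*h) *\<^sub>R (0,(1,0)))" by simp
        also have "\<dots> = h * D (1,(0,0)) + (-\<sigma>*h) * D (0,(1,0))"
          by (subst linear_add[OF linD], subst linear_scale[OF linD], subst linear_scale[OF linD]) simp
        also have "\<dots> = h * (D (1,(0,0)) - \<sigma> * D (0,(1,0)))" by (simp add: algebra_simps)
        finally show "D (h, (-\<sigma>*h, 0)) = 0 * h" using D0 by simp
      qed
      ultimately show ?thesis by (simp add: has_field_derivative_def)
    qed
    have "g a' = g b'" by (rule lip_deriv0_const[OF ab'(2) lipg M derg])
    then show ?thesis by (simp add: g_def)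
  qed
  obtain NW where NW: "negligible NW" and HW: "\<And>w. w \<notin> NW \<Longrightarrow> AE t in lborel. (w, t) \<notin> N''"
    using AEw by (rule AE_negl) blast
  have claim2: "u (\<Phi> (w, a')) = u (\<Phi> (w, b'))"
    if ab': "0 < a'" "a' < b'" "b' < T" "b' < fst w" for w a' b'
  proof (rule ccontr)
    assume ne: "u (\<Phi> (w, a')) \<noteq> u (\<Phi> (w, b'))"
    define E where "E = {w. b' < fst w} \<inter> {w. u (\<Phi> (w, a')) \<noteq> u (\<Phi> (w, b'))}"
    have cw: "continuous_on UNIV (\<lambda>w. u (\<Phi> (w, c)))" if "0 < c" "c < T" for c
    proof (rule continuous_on_compose2[OF cont])
      show "continuous_on UNIV (\<lambda>w. \<Phi> (w, c))" unfolding \<Phi>_def by (auto intro!: continuous_intros)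
      show "(\<lambda>w. \<Phi> (w, c)) ` UNIV \<subseteq> {0..T} \<times> UNIV" using that by (auto simp: \<Phi>_def)
    qed
    have "open E" unfolding E_def
      by (intro open_Int open_Collect_less open_Collect_neq cw continuous_intros) (use ab' in auto)
    moreover have "E \<noteq> {}" using ab' ne by (auto simp: E_def)
    moreover have "E \<subseteq> NW"
    proof
      fix v assume v: "v \<in> E"
      show "v \<in> NW"
      proof (rule ccontr)
        assume "v \<notin> NW"
        then have "AE t in lborel. (v, t) \<notin> N''" by (rule HW)
        from claim1[OF this ab'(1-3)] v show False by (auto simp: E_def)
      qed
    qed
    ultimately show False using NW open_not_negligible negligible_subset by blast
  qed
  show ?thesis
  proof (cases "a = b")
    case True then show ?thesis by simp
  next
    case False
    define m where "m = min T y"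
    have m: "0 < m" "b \<le> m" using ab False T by (auto simp: m_def)
    define h where "h = (\<lambda>t. u (\<Phi> ((y, x2), t)))"
    have ch: "continuous_on {0..m} h" unfolding h_def
    proof (rule continuous_on_compose2[OF cont])
      show "continuous_on {0..m} (\<lambda>t. \<Phi> ((y, x2), t))" unfolding \<Phi>_def by (auto intro!: continuous_intros)
      show "(\<lambda>t. \<Phi> ((y, x2), t)) ` {0..m} \<subseteq> {0..T} \<times> UNIV" by (auto simp: \<Phi>_def m_def)
    qed
    have hc: "h t = h (m/2)" if "t \<in> {0<..<m}" for t
    proof -
      consider "t < m/2" | "t = m/2" | "t > m/2" by linarith
      then show ?thesis
      proof cases
        case 1 then show ?thesis using that claim2[of t "m/2" "(y,x2)"] by (auto simp: h_def m_def)
      next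
        case 2 then show ?thesis by (simp only:)
      next
        case 3 then show ?thesis using that m claim2[of "m/2" t "(y,x2)"] by (auto simp: h_def m_def)
      qed
    qed
    have cl: "closure {0<..<m} = {0..m}" using m by simp
    have "h a = h (m/2)"
      by (rule continuous_constant_on_closure[where S="{0<..<m}"]) (simp_all only: cl ch hc, use m ab in auto)
    moreover have "h b = h (m/2)"
      by (rule continuous_constant_on_closure[where S="{0<..<m}"]) (simp_all only: cl ch hc, use m ab in auto)
    ultimately show ?thesis by (simp add: h_def \<Phi>_def)
  qed
qed



lemma semigroup:
  assumes "0 \<le> \<tau>" "\<tau> \<le> t" "t \<le> s"
  shows "X_lam lam s t (X_lam lam t \<tau> x) = X_lam lam s \<tau> x"
proof (cases x)
  case (Pair x1 x2)
  consider "x1 > 0" | "x1 = 0" | "x1 < 0" by linarith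
  then show ?thesis
  proof cases
    case 1 then show ?thesis using assms Pair
      by (cases "x1 \<le> t - \<tau>") (auto simp: X_lam_def pos_part_def max_def algebra_simps)
  next
    case 2 then show ?thesis using assms Pair
      by (auto simp: X_lam_def pos_part_def max_def algebra_simps)
  next
    case 3 then show ?thesis using assms Pair
      by (cases "-x1 \<le> t - \<tau>") (auto simp: X_lam_def pos_part_def max_def algebra_simps)
  qed
qed

definition bnd :: "real \<Rightarrow> (real \<times> (real \<times> real)) set" where
  "bnd T = {z. fst (snd z) = 0} \<union> {z. fst (snd z) = T - fst z} \<union> {z. - fst (snd z) = T - fst z}"

lemma negl_bnd: "negligible (bnd T)"
proof -
  have "{z::real \<times> (real \<times> real). fst (snd z) = 0} = {z. (0,(1,0)) \<bullet> z = 0}" by auto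
  moreover have "{z::real \<times> (real \<times> real). fst (snd z) = T - fst z} = {z. (1,(1,0)) \<bullet> z = T}"
    by (auto simp: algebra_simps)
  moreover have "{z::real \<times> (real \<times> real). - fst (snd z) = T - fst z} = {z. (1,(-1,0)) \<bullet> z = T}"
    by (auto simp: algebra_simps)
  moreover have "negligible {z::real \<times> (real \<times> real). (0,(1,0)) \<bullet> z = 0}"
    by (rule negligible_hyperplane) (simp add: prod_eq_iff)
  moreover have "negligible {z::real \<times> (real \<times> real). (1,(1,0)) \<bullet> z = T}"
    by (rule negligible_hyperplane) (simp add: prod_eq_iff)
  moreover have "negligible {z::real \<times> (real \<times> real). (1,(-1,0)) \<bullet> z = T}"
    by (rule negligible_hyperplane) (simp add: prod_eq_iff)
  ultimately show ?thesis unfolding bnd_def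
    by (simp only: negligible_Un_eq)
qed

lemma AE_bnd: "AE z in lborel. z \<notin> bnd T"
  by (rule negl_AE[OF negl_bnd]) auto

lemma pde_real:
  fixes p :: "real \<times> (real \<times> real) \<Rightarrow> real"
  assumes "solves_transport T a_ex p"
  shows "AE z in lborel. z \<in> {0<..<T} \<times> UNIV \<longrightarrow>
       (\<exists>D. (p has_derivative D) (at z) \<and> D (1,(0,0)) - sgn (fst (snd z)) * D (0,(1,0)) = 0)"
  using assms unfolding solves_transport_def a_ex_def
  by (rule AE_mp) (auto intro!: AE_I2)

lemma pde_fst:
  fixes X :: "real \<times> (real \<times> real) \<Rightarrow> real \<times> real"
  assumes "solves_transport T a_ex X"
  shows "AE z in lborel. z \<in> {0<..<T} \<times> UNIV \<longrightarrow>
       (\<exists>D. ((\<lambda>z. fst (X z)) has_derivative D) (at z) \<and> D (1,(0,0)) - sgn (fst (snd z)) * D (0,(1,0)) = 0)"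
  using assms unfolding solves_transport_def a_ex_def
proof (rule AE_mp, intro AE_I2 impI)
  fix z assume H: "z \<in> {0<..<T} \<times> UNIV \<longrightarrow> (\<exists>D. (X has_derivative D) (at z) \<and>
      D (1, 0, 0) + fst (- sgn (fst (snd z)), 0::real) *\<^sub>R D (0, 1, 0) + snd (- sgn (fst (snd z)), 0::real) *\<^sub>R D (0, 0, 1) = 0)"
    and z: "z \<in> {0<..<T} \<times> UNIV"
  then obtain D where D: "(X has_derivative D) (at z)"
    "D (1, 0, 0) + fst (- sgn (fst (snd z)), 0::real) *\<^sub>R D (0, 1, 0) + snd (- sgn (fst (snd z)), 0::real) *\<^sub>R D (0, 0, 1) = 0"
    by blast
  show "\<exists>D. ((\<lambda>z. fst (X z)) has_derivative D) (at z) \<and> D (1,(0,0)) - sgn (fst (snd z)) * D (0,(1,0)) = 0"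
    using has_derivative_fst[OF D(1)] D(2) by (intro exI[of _ "\<lambda>h. fst (D h)"]) (auto simp: prod_eq_iff)
qed

lemma pde_snd:
  fixes X :: "real \<times> (real \<times> real) \<Rightarrow> real \<times> real"
  assumes "solves_transport T a_ex X"
  shows "AE z in lborel. z \<in> {0<..<T} \<times> UNIV \<longrightarrow>
       (\<exists>D. ((\<lambda>z. snd (X z)) has_derivative D) (at z) \<and> D (1,(0,0)) - sgn (fst (snd z)) * D (0,(1,0)) = 0)"
  using assms unfolding solves_transport_def a_ex_def
proof (rule AE_mp, intro AE_I2 impI)
  fix z assume H: "z \<in> {0<..<T} \<times> UNIV \<longrightarrow> (\<exists>D. (X has_derivative D) (at z) \<and>
      D (1, 0, 0) + fst (- sgn (fst (snd z)), 0::real) *\<^sub>R D (0, 1, 0) + snd (- sgn (fst (snd z)), 0::real) *\<^sub>R D (0, 0, 1) = 0)"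
    and z: "z \<in> {0<..<T} \<times> UNIV"
  then obtain D where D: "(X has_derivative D) (at z)"
    "D (1, 0, 0) + fst (- sgn (fst (snd z)), 0::real) *\<^sub>R D (0, 1, 0) + snd (- sgn (fst (snd z)), 0::real) *\<^sub>R D (0, 0, 1) = 0"
    by blast
  show "\<exists>D. ((\<lambda>z. snd (X z)) has_derivative D) (at z) \<and> D (1,(0,0)) - sgn (fst (snd z)) * D (0,(1,0)) = 0"
    using has_derivative_snd[OF D(1)] D(2) by (intro exI[of _ "\<lambda>h. snd (D h)"]) (auto simp: prod_eq_iff)
qed

lemma flow_const:
  assumes T: "T > 0" and fl: "transport_flow T a_ex X" and sig: "\<sigma> = 1 \<or> \<sigma> = -1"
    and ab: "0 \<le> a" "a \<le> b" "b \<le> T" "b \<le> y"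
  shows "X (a, (\<sigma>*(y-a), x2)) = X (b, (\<sigma>*(y-b), x2))"
proof -
  from fl obtain C where C: "C-lipschitz_on ({0..T} \<times> UNIV) X" and st: "solves_transport T a_ex X"
    unfolding transport_flow_def by blast
  have l1: "locLip ({0..T} \<times> UNIV) (\<lambda>z. fst (X z))" unfolding locLip_def
  proof (intro allI impI exI)
    fix K assume "compact K \<and> K \<subseteq> {0..T} \<times> (UNIV :: (real \<times> real) set)"
    then have "C-lipschitz_on K X" using C lipschitz_on_subset by blast
    then show "C-lipschitz_on K (\<lambda>z. fst (X z))"
      unfolding lipschitz_on_def by (meson dist_fst_le order_trans)
  qed
  have l2: "locLip ({0..T} \<times> UNIV) (\<lambda>z. snd (X z))" unfolding locLip_def
  proof (intro allI impI exI)
    fix K assume "compact K \<and> K \<subseteq> {0..T} \<times> (UNIV :: (real \<times> real) set)"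
    then have "C-lipschitz_on K X" using C lipschitz_on_subset by blast
    then show "C-lipschitz_on K (\<lambda>z. snd (X z))"
      unfolding lipschitz_on_def by (meson dist_snd_le order_trans)
  qed
  have "fst (X (a, (\<sigma>*(y-a), x2))) = fst (X (b, (\<sigma>*(y-b), x2)))"
    by (rule char_const[OF T sig l1 pde_fst[OF st] ab])
  moreover have "snd (X (a, (\<sigma>*(y-a), x2))) = snd (X (b, (\<sigma>*(y-b), x2)))"
    by (rule char_const[OF T sig l2 pde_snd[OF st] ab])
  ultimately show ?thesis by (simp add: prod_eq_iff)
qed



lemma deriv_local:
  assumes "open U" "z \<in> U" "\<And>y. y \<in> U \<Longrightarrow> g y = f y" "(g has_derivative D) (at z)"
  shows "(f has_derivative D) (at z)"
  using has_derivative_transform_within_open[OF assms(4) assms(1) assms(2)] assms(3) by blast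

lemma comp_le_norm:
  fixes z z' :: "real \<times> (real \<times> real)"
  shows "\<bar>fst z - fst z'\<bar> \<le> dist z z'" "\<bar>fst (snd z) - fst (snd z')\<bar> \<le> dist z z'"
    "\<bar>snd (snd z) - snd (snd z')\<bar> \<le> dist z z'"
proof -
  have a: "norm (fst (z - z')) \<le> norm (z - z')" "norm (snd (z - z')) \<le> norm (z - z')"
    by (metis norm_fst_le prod.collapse, metis norm_snd_le prod.collapse)
  have b: "norm (fst (snd (z - z'))) \<le> norm (snd (z - z'))" "norm (snd (snd (z - z'))) \<le> norm (snd (z - z'))"
    by (metis norm_fst_le prod.collapse, metis norm_snd_le prod.collapse)
  show "\<bar>fst z - fst z'\<bar> \<le> dist z z'" using a by (simp add: dist_norm)
  show "\<bar>fst (snd z) - fst (snd z')\<bar> \<le> dist z z'" using a b by (simp add: dist_norm)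
  show "\<bar>snd (snd z) - snd (snd z')\<bar> \<le> dist z z'" using a b by (simp add: dist_norm)
qed

lemma pos_part_lip: "\<bar>pos_part a - pos_part b\<bar> \<le> \<bar>a - b\<bar>"
  by (auto simp: pos_part_def max_def)

lemma p0_lip: "2-lipschitz_on UNIV (\<lambda>z::real \<times> (real \<times> real). pos_part (T - fst z - \<bar>fst (snd z)\<bar>))"
proof (rule lipschitz_onI)
  fix z z' :: "real \<times> (real \<times> real)"
  have "\<bar>pos_part (T - fst z - \<bar>fst (snd z)\<bar>) - pos_part (T - fst z' - \<bar>fst (snd z')\<bar>)\<bar>
      \<le> \<bar>(T - fst z - \<bar>fst (snd z)\<bar>) - (T - fst z' - \<bar>fst (snd z')\<bar>)\<bar>" by (rule pos_part_lip)
  also have "\<dots> \<le> \<bar>fst z - fst z'\<bar> + \<bar>fst (snd z) - fst (snd z')\<bar>" by linarith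
  also have "\<dots> \<le> 2 * dist z z'" using comp_le_norm[of z z'] by linarith
  finally show "dist (pos_part (T - fst z - \<bar>fst (snd z)\<bar>)) (pos_part (T - fst z' - \<bar>fst (snd z')\<bar>)) \<le> 2 * dist z z'"
    by (simp add: dist_real_def)
qed simp

lemma soft_eq: "s \<ge> 0 \<Longrightarrow> pos_part (\<bar>x\<bar> - s) * sgn x = max (x - s) 0 + min (x + s) 0"
  by (auto simp: pos_part_def sgn_if max_def min_def)

lemma XT_lip:
  assumes "T > 0"
  shows "(5 + 2*\<bar>lam\<bar>)-lipschitz_on ({0..T} \<times> UNIV) (XT_lam T lam)"
proof (rule lipschitz_onI)
  fix z z' :: "real \<times> (real \<times> real)"
  assume z: "z \<in> {0..T} \<times> UNIV" and z': "z' \<in> {0..T} \<times> UNIV"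
  define s where "s = T - fst z" define s' where "s' = T - fst z'"
  have s0: "s \<ge> 0" "s' \<ge> 0" using z z' by (auto simp: s_def s'_def)
  let ?x = "fst (snd z)" and ?x' = "fst (snd z')"
  have c1: "\<bar>fst (XT_lam T lam z) - fst (XT_lam T lam z')\<bar> \<le> 2 * (\<bar>?x - ?x'\<bar> + \<bar>s - s'\<bar>)"
  proof -
    have "fst (XT_lam T lam z) - fst (XT_lam T lam z') =
       (max (?x - s) 0 - max (?x' - s') 0) + (min (?x + s) 0 - min (?x' + s') 0)"
      using soft_eq[OF s0(1), of ?x] soft_eq[OF s0(2), of ?x'] by (simp add: XT_lam_def s_def s'_def)
    moreover have "\<bar>max (?x - s) 0 - max (?x' - s') 0\<bar> \<le> \<bar>?x - ?x'\<bar> + \<bar>s - s'\<bar>" by (auto simp: max_def)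
    moreover have "\<bar>min (?x + s) 0 - min (?x' + s') 0\<bar> \<le> \<bar>?x - ?x'\<bar> + \<bar>s - s'\<bar>" by (auto simp: min_def)
    ultimately show ?thesis by (smt (verit))
  qed
  have c2: "\<bar>snd (XT_lam T lam z) - snd (XT_lam T lam z')\<bar> \<le> \<bar>snd (snd z) - snd (snd z')\<bar> + \<bar>lam\<bar> * (\<bar>?x - ?x'\<bar> + \<bar>s - s'\<bar>)"
  proof -
    have "snd (XT_lam T lam z) - snd (XT_lam T lam z') = (snd (snd z) - snd (snd z')) +
        lam * (pos_part (s - \<bar>?x\<bar>) - pos_part (s' - \<bar>?x'\<bar>))"
      by (simp add: XT_lam_def s_def s'_def algebra_simps)
    moreover have "\<bar>lam * (pos_part (s - \<bar>?x\<bar>) - pos_part (s' - \<bar>?x'\<bar>))\<bar> \<le> \<bar>lam\<bar> * (\<bar>?x - ?x'\<bar> + \<bar>s - s'\<bar>)"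
    proof -
      have "\<bar>pos_part (s - \<bar>?x\<bar>) - pos_part (s' - \<bar>?x'\<bar>)\<bar> \<le> \<bar>(s - \<bar>?x\<bar>) - (s' - \<bar>?x'\<bar>)\<bar>" by (rule pos_part_lip)
      also have "\<dots> \<le> \<bar>?x - ?x'\<bar> + \<bar>s - s'\<bar>" by linarith
      finally show ?thesis by (simp add: abs_mult mult_left_mono)
    qed
    ultimately show ?thesis by (smt (verit))
  qed
  have d: "\<bar>?x - ?x'\<bar> \<le> dist z z'" "\<bar>s - s'\<bar> \<le> dist z z'" "\<bar>snd (snd z) - snd (snd z')\<bar> \<le> dist z z'"
    using comp_le_norm[of z z'] by (auto simp: s_def s'_def)
  have "dist (XT_lam T lam z) (XT_lam T lam z') \<le>
      \<bar>fst (XT_lam T lam z) - fst (XT_lam T lam z')\<bar> + \<bar>snd (XT_lam T lam z) - snd (XT_lam T lam z')\<bar>"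
  proof -
    have "dist (XT_lam T lam z) (XT_lam T lam z') = norm (fst (XT_lam T lam z) - fst (XT_lam T lam z'), snd (XT_lam T lam z) - snd (XT_lam T lam z'))"
      by (cases "XT_lam T lam z", cases "XT_lam T lam z'") (simp add: dist_norm)
    also have "\<dots> \<le> norm (fst (XT_lam T lam z) - fst (XT_lam T lam z')) + norm (snd (XT_lam T lam z) - snd (XT_lam T lam z'))" by (rule norm_Pair_le)
    finally show ?thesis by simp
  qed
  also have "\<dots> \<le> 2 * (\<bar>?x - ?x'\<bar> + \<bar>s - s'\<bar>) + (\<bar>snd (snd z) - snd (snd z')\<bar> + \<bar>lam\<bar> * (\<bar>?x - ?x'\<bar> + \<bar>s - s'\<bar>))"
    using c1 c2 by linarith
  also have "\<dots> \<le> 2 * (2 * dist z z') + (dist z z' + \<bar>lam\<bar> * (2 * dist z z'))"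
    using d by (intro add_mono mult_left_mono) auto
  also have "\<dots> = (5 + 2*\<bar>lam\<bar>) * dist z z'" by (simp add: algebra_simps)
  finally show "dist (XT_lam T lam z) (XT_lam T lam z') \<le> (5 + 2*\<bar>lam\<bar>) * dist z z'" .
qed simp

definition Uin :: "real \<Rightarrow> real \<Rightarrow> (real \<times> (real \<times> real)) set" where
  "Uin T \<sigma> = {z. 0 < \<sigma> * fst (snd z) \<and> \<sigma> * fst (snd z) < T - fst z}"
definition Uout :: "real \<Rightarrow> real \<Rightarrow> (real \<times> (real \<times> real)) set" where
  "Uout T \<sigma> = {z. 0 < \<sigma> * fst (snd z) \<and> T - fst z < \<sigma> * fst (snd z)}"

lemma open_Uin: "open (Uin T \<sigma>)" unfolding Uin_def
  by (intro open_Collect_conj open_Collect_less continuous_intros)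
lemma open_Uout: "open (Uout T \<sigma>)" unfolding Uout_def
  by (intro open_Collect_conj open_Collect_less continuous_intros)

lemma sig_facts:
  fixes \<sigma> x :: real
  assumes "\<sigma> = 1 \<or> \<sigma> = -1" "0 < \<sigma> * x"
  shows "sgn x = \<sigma>" "\<bar>x\<bar> = \<sigma> * x" "\<sigma> * \<sigma> = 1"
  using assms by (auto simp: sgn_if zero_less_mult_iff)

lemma region:
  assumes "z \<notin> bnd T"
  shows "\<exists>\<sigma>. (\<sigma> = 1 \<or> \<sigma> = -1) \<and> (z \<in> Uin T \<sigma> \<or> z \<in> Uout T \<sigma>)"
proof -
  have x: "fst (snd z) \<noteq> 0" "\<bar>fst (snd z)\<bar> \<noteq> T - fst z" using assms
    by (auto simp: bnd_def abs_if split: if_splits)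
  show ?thesis
  proof (cases "fst (snd z) > 0")
    case True then show ?thesis using x
      by (intro exI[of _ 1]) (auto simp: Uin_def Uout_def)
  next
    case False then show ?thesis using x
      by (intro exI[of _ "-1"]) (auto simp: Uin_def Uout_def)
  qed
qed

definition p0 :: "real \<Rightarrow> real \<times> (real \<times> real) \<Rightarrow> real" where
  "p0 T z = pos_part (T - fst z - \<bar>fst (snd z)\<bar>)"

lemma p0_adj: "p0 T \<in> adjoint_class T a_ex"
  unfolding adjoint_class_def
proof (intro CollectI conjI allI)
  show "locLip ({0..T} \<times> UNIV) (p0 T)" unfolding locLip_def p0_def
    using p0_lip lipschitz_on_subset by blast
  show "p0 T (T, x) = 0" for x by (simp add: p0_def pos_part_def)
  show "solves_transport T a_ex (p0 T)" unfolding solves_transport_def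
  proof (rule AE_mp[OF AE_bnd], intro AE_I2 impI)
    fix z assume zb: "z \<notin> bnd T" and z: "z \<in> {0<..<T} \<times> UNIV"
    obtain \<sigma> where sig: "\<sigma> = 1 \<or> \<sigma> = -1" and zU: "z \<in> Uin T \<sigma> \<or> z \<in> Uout T \<sigma>"
      using region[OF zb] by blast
    have sz: "sgn (fst (snd z)) = \<sigma>" "\<sigma> * \<sigma> = 1" using zU sig_facts[OF sig] by (auto simp: Uin_def Uout_def)
    from zU show "\<exists>D. (p0 T has_derivative D) (at z) \<and>
       D (1, 0, 0) + fst (a_ex (fst z) (snd z)) *\<^sub>R D (0, 1, 0) + snd (a_ex (fst z) (snd z)) *\<^sub>R D (0, 0, 1) = 0"
    proof
      assume zi: "z \<in> Uin T \<sigma>"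
      have "(p0 T has_derivative (\<lambda>h. - fst h - \<sigma> * fst (snd h))) (at z)"
      proof (rule deriv_local[OF open_Uin zi])
        show "((\<lambda>y. T - fst y - \<sigma> * fst (snd y)) has_derivative (\<lambda>h. - fst h - \<sigma> * fst (snd h))) (at z)"
          by (auto intro!: derivative_eq_intros)
        fix y assume "y \<in> Uin T \<sigma>"
        then show "T - fst y - \<sigma> * fst (snd y) = p0 T y"
          using sig_facts[OF sig] by (auto simp: Uin_def p0_def pos_part_def)
      qed
      then show ?thesis using sz by (intro exI[of _ "\<lambda>h. - fst h - \<sigma> * fst (snd h)"]) (simp add: a_ex_def)
    next
      assume zo: "z \<in> Uout T \<sigma>"
      have "(p0 T has_derivative (\<lambda>h. 0)) (at z)"
      proof (rule deriv_local[OF open_Uout zo])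
        show "((\<lambda>y. 0) has_derivative (\<lambda>h. 0)) (at z)" by simp
        fix y assume "y \<in> Uout T \<sigma>"
        then show "0 = p0 T y"
          using sig_facts[OF sig] by (auto simp: Uout_def p0_def pos_part_def)
      qed
      then show ?thesis by (intro exI[of _ "\<lambda>h. 0"]) (simp add: a_ex_def)
    qed
  qed
qed



lemma XT_flow:
  assumes T: "T > 0"
  shows "transport_flow T a_ex (XT_lam T lam)"
proof -
  have der: "\<exists>D. (XT_lam T lam has_derivative D) (at z) \<and>
       D (1, 0, 0) + fst (a_ex (fst z) (snd z)) *\<^sub>R D (0, 1, 0) + snd (a_ex (fst z) (snd z)) *\<^sub>R D (0, 0, 1) = 0
       \<and> spatial_jac D \<ge> 0"
    if zb: "z \<notin> bnd T" for z
  proof -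
    obtain \<sigma> where sig: "\<sigma> = 1 \<or> \<sigma> = -1" and zU: "z \<in> Uin T \<sigma> \<or> z \<in> Uout T \<sigma>"
      using region[OF zb] by blast
    have sz: "sgn (fst (snd z)) = \<sigma>" "\<sigma> * \<sigma> = 1" using zU sig_facts[OF sig] by (auto simp: Uin_def Uout_def)
    have ss: "\<sigma> * (\<sigma> * c) = c" for c using sz(2) by (metis mult.assoc mult.left_neutral)
    from zU show ?thesis
    proof
      assume zi: "z \<in> Uin T \<sigma>"
      define D where "D = (\<lambda>h::real \<times> (real \<times> real). (0::real, snd (snd h) + lam * (- fst h - \<sigma> * fst (snd h))))"
      have "(XT_lam T lam has_derivative D) (at z)"
      proof (rule deriv_local[OF open_Uin zi])
        show "((\<lambda>y. (0::real, snd (snd y) + lam * (T - fst y - \<sigma> * fst (snd y)))) has_derivative D) (at z)"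
          unfolding D_def by (auto intro!: derivative_eq_intros)
        fix y assume "y \<in> Uin T \<sigma>"
        then show "(0, snd (snd y) + lam * (T - fst y - \<sigma> * fst (snd y))) = XT_lam T lam y"
          using sig_facts[OF sig] by (auto simp: Uin_def XT_lam_def pos_part_def)
      qed
      then show ?thesis using sz
        by (intro exI[of _ D]) (simp add: a_ex_def D_def spatial_jac_def algebra_simps ss zero_prod_def)
    next
      assume zo: "z \<in> Uout T \<sigma>"
      define D where "D = (\<lambda>h::real \<times> (real \<times> real). (fst (snd h) + \<sigma> * fst h, snd (snd h)))"
      have "(XT_lam T lam has_derivative D) (at z)"
      proof (rule deriv_local[OF open_Uout zo])
        show "((\<lambda>y. (fst (snd y) - \<sigma> * (T - fst y), snd (snd y))) has_derivative D) (at z)"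
          unfolding D_def by (auto intro!: derivative_eq_intros simp: algebra_simps)
        fix y assume y: "y \<in> Uout T \<sigma>"
        have "\<bar>fst (snd y)\<bar> = \<sigma> * fst (snd y)" "sgn (fst (snd y)) = \<sigma>" "\<sigma> * \<sigma> = 1"
          using y sig_facts[OF sig] by (auto simp: Uout_def)
        then show "(fst (snd y) - \<sigma> * (T - fst y), snd (snd y)) = XT_lam T lam y"
          using y by (auto simp: Uout_def XT_lam_def pos_part_def algebra_simps)
      qed
      then show ?thesis using sz
        by (intro exI[of _ D]) (simp add: a_ex_def D_def spatial_jac_def algebra_simps ss zero_prod_def)
    qed
  qed
  show ?thesis unfolding transport_flow_def
  proof (intro conjI allI)
    show "\<exists>C. C-lipschitz_on ({0..T} \<times> UNIV) (XT_lam T lam)" using XT_lip[OF T] by blast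
    show "solves_transport T a_ex (XT_lam T lam)" unfolding solves_transport_def
      by (rule AE_mp[OF AE_bnd], intro AE_I2 impI) (use der in blast)
    show "XT_lam T lam (T, x) = x" for x
      by (cases x) (auto simp: XT_lam_def pos_part_def sgn_if max_def)
    show "AE z in lborel. z \<in> {0<..<T} \<times> UNIV \<longrightarrow> (\<exists>D. (XT_lam T lam has_derivative D) (at z) \<and> 0 \<le> spatial_jac D)"
      by (rule AE_mp[OF AE_bnd], intro AE_I2 impI) (use der in blast)
  qed
qed

lemma adj_zero:
  assumes T: "T > 0" and p: "p \<in> adjoint_class T a_ex"
    and z: "z \<in> {0<..<T} \<times> UNIV" and c: "\<bar>fst (snd z)\<bar> \<ge> T - fst z"
  shows "p z = 0"
proof -
  obtain t x1 x2 where zz: "z = (t, (x1, x2))" by (cases z) auto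
  have loc: "locLip ({0..T} \<times> UNIV) p" and st: "solves_transport T a_ex p" and pT: "\<And>x. p (T, x) = 0"
    using p by (auto simp: adjoint_class_def)
  have x1: "x1 \<noteq> 0" using z c zz by auto
  define \<sigma> where "\<sigma> = sgn x1"
  have sig: "\<sigma> = 1 \<or> \<sigma> = -1" using x1 by (auto simp: \<sigma>_def sgn_if)
  define y where "y = \<bar>x1\<bar> + t"
  have "p (t, (\<sigma>*(y-t), x2)) = p (T, (\<sigma>*(y-T), x2))"
    by (rule char_const[OF T sig loc pde_real[OF st]]) (use z c zz in \<open>auto simp: y_def\<close>)
  moreover have "\<sigma>*(y-t) = x1" using x1 by (auto simp: \<sigma>_def y_def sgn_if)
  ultimately show ?thesis using pT zz by simp
qed

lemma Ve_eq:
  assumes T: "T > 0"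
  shows "Ve T a_ex = {z. z \<in> {0<..<T} \<times> UNIV \<and> \<bar>fst (snd z)\<bar> < T - fst z}"
proof
  show "Ve T a_ex \<subseteq> {z. z \<in> {0<..<T} \<times> UNIV \<and> \<bar>fst (snd z)\<bar> < T - fst z}"
    unfolding Ve_def using adj_zero[OF T] by force
  show "{z. z \<in> {0<..<T} \<times> UNIV \<and> \<bar>fst (snd z)\<bar> < T - fst z} \<subseteq> Ve T a_ex"
  proof
    fix z :: "real \<times> (real \<times> real)" assume z: "z \<in> {z. z \<in> {0<..<T} \<times> UNIV \<and> \<bar>fst (snd z)\<bar> < T - fst z}"
    then have "p0 T z \<noteq> 0" by (auto simp: p0_def pos_part_def)
    then show "z \<in> Ve T a_ex" unfolding Ve_def using p0_adj z by blast
  qed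
qed



definition Rf :: "real \<times> (real \<times> real) \<Rightarrow> real \<times> (real \<times> real)" where
  "Rf z = (fst z, (- fst (snd z), snd (snd z)))"

lemma Rf_Rf[simp]: "Rf (Rf z) = z" by (simp add: Rf_def)

lemma linear_Rf: "linear Rf"
  by (rule linearI) (auto simp: Rf_def)

lemma jac_part:
  assumes T: "T > 0" and fl: "transport_flow T a_ex X"
  shows "AE z in lborel. z \<in> {0<..<T} \<times> UNIV \<longrightarrow>
             (\<exists>D. (X has_derivative D) (at z) \<and>
                  spatial_jac D = (if \<bar>fst (snd z)\<bar> \<ge> T - fst z then 1 else 0))"
proof -
  have XT: "\<And>x. X (T, x) = x"
    and AEH: "AE z in lborel. z \<in> {0<..<T} \<times> UNIV \<longrightarrow> (\<exists>D. (X has_derivative D) (at z) \<and> spatial_jac D \<ge> 0)"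
    using fl unfolding transport_flow_def by auto
  obtain N where N: "negligible N" and HN: "\<And>z. z \<notin> N \<Longrightarrow> z \<in> {0<..<T} \<times> UNIV \<longrightarrow>
      (\<exists>D. (X has_derivative D) (at z) \<and> spatial_jac D \<ge> 0)"
    using AEH by (rule AE_negl) blast
  have AER: "AE z in lborel. z \<notin> Rf ` N"
    by (rule negl_AE[OF negl_lin_image[OF linear_Rf _ N]]) auto
  define Ucone where "Ucone = {y::real \<times> (real \<times> real). 0 < fst y} \<inter> {y. \<bar>fst (snd y)\<bar> < T - fst y}"
  have oc: "open Ucone" unfolding Ucone_def
    by (intro open_Int open_Collect_less continuous_intros)
  have refl: "X y = X (Rf y)" if y: "y \<in> Ucone" for y
  proof -
    obtain t x1 x2 where yy: "y = (t, (x1, x2))" by (cases y) auto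
    define \<sigma> where "\<sigma> = (if x1 \<ge> 0 then 1 else (-1::real))"
    have sig: "\<sigma> = 1 \<or> \<sigma> = -1" "-\<sigma> = 1 \<or> -\<sigma> = -1" by (auto simp: \<sigma>_def)
    define w where "w = \<sigma> * x1 + t"
    have w: "0 \<le> t" "t \<le> w" "w \<le> T" "\<sigma> * x1 = \<bar>x1\<bar>" using y yy by (auto simp: Ucone_def w_def \<sigma>_def)
    have "X (t, (\<sigma>*(w-t), x2)) = X (w, (\<sigma>*(w-w), x2))"
      by (rule flow_const[OF T fl sig(1)]) (use w in auto)
    moreover have "X (t, ((-\<sigma>)*(w-t), x2)) = X (w, ((-\<sigma>)*(w-w), x2))"
      by (rule flow_const[OF T fl sig(2)]) (use w in auto)
    moreover have "\<sigma>*(w-t) = x1" using sig by (auto simp: w_def)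
    ultimately show ?thesis using yy by (simp add: Rf_def)
  qed
  show ?thesis
  proof (rule AE_mp[OF eventually_conj[OF AE_bnd eventually_conj[OF AER AEH]]], intro AE_I2 impI)
    fix z assume H: "z \<notin> bnd T \<and> z \<notin> Rf ` N \<and> (z \<in> {0<..<T} \<times> UNIV \<longrightarrow> (\<exists>D. (X has_derivative D) (at z) \<and> spatial_jac D \<ge> 0))"
      and z: "z \<in> {0<..<T} \<times> UNIV"
    obtain \<sigma> where sig: "\<sigma> = 1 \<or> \<sigma> = -1" and zU: "z \<in> Uin T \<sigma> \<or> z \<in> Uout T \<sigma>"
      using region[of z T] H by blast
    have ss: "\<sigma> * (\<sigma> * c) = c" for c using sig by auto
    from zU show "\<exists>D. (X has_derivative D) (at z) \<and>
                  spatial_jac D = (if \<bar>fst (snd z)\<bar> \<ge> T - fst z then 1 else 0)"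
    proof
      assume zi: "z \<in> Uin T \<sigma>"
      have cond: "\<not> (\<bar>fst (snd z)\<bar> \<ge> T - fst z)" using zi sig_facts[OF sig] by (auto simp: Uin_def)
      have zc: "z \<in> Ucone" using zi z sig_facts[OF sig] by (auto simp: Uin_def Ucone_def)
      obtain D where D: "(X has_derivative D) (at z)" "spatial_jac D \<ge> 0" using H z by blast
      have "Rf z \<notin> N" using H by (metis Rf_Rf image_eqI)
      moreover have "Rf z \<in> {0<..<T} \<times> UNIV" using z by (auto simp: Rf_def)
      ultimately have "\<exists>D'. (X has_derivative D') (at (Rf z)) \<and> spatial_jac D' \<ge> 0"
        using HN[of "Rf z"] by auto
      then obtain D' where D': "(X has_derivative D') (at (Rf z))" "spatial_jac D' \<ge> 0"
        by blast
      have dR: "(Rf has_derivative Rf) (at z)"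
        by (rule bounded_linear_imp_has_derivative) (simp add: linear_Rf linear_conv_bounded_linear[symmetric])
      have "((\<lambda>y. X (Rf y)) has_derivative (\<lambda>h. D' (Rf h))) (at z)"
        using has_derivative_compose[OF dR D'(1)] by simp
      then have "(X has_derivative (\<lambda>h. D' (Rf h))) (at z)"
        by (rule deriv_local[OF oc zc, rotated]) (simp add: refl)
      then have DD: "D = (\<lambda>h. D' (Rf h))" using D(1) by (rule has_derivative_unique[rotated])
      have linD': "linear D'" using D'(1) by (rule has_derivative_linear)
      have "D' (0, (-1, 0)) = - D' (0, (1, 0))"
        using linear_neg[OF linD', of "(0, (1, 0))"] by simp
      then have "spatial_jac D = - spatial_jac D'"
        by (simp add: DD spatial_jac_def Rf_def algebra_simps)
      then have "spatial_jac D = 0" using D(2) D'(2) by linarith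
      then show ?thesis using D(1) cond by auto
    next
      assume zo: "z \<in> Uout T \<sigma>"
      have cond: "\<bar>fst (snd z)\<bar> \<ge> T - fst z" using zo sig_facts[OF sig] by (auto simp: Uout_def)
      define U' where "U' = Uout T \<sigma> \<inter> ({y. 0 < fst y} \<inter> {y. fst y < T})"
      have oU': "open U'" unfolding U'_def
        by (intro open_Int open_Uout open_Collect_less continuous_intros)
      have zU': "z \<in> U'" using zo z by (auto simp: U'_def)
      define D where "D = (\<lambda>h::real \<times> (real \<times> real). (fst (snd h) + \<sigma> * fst h, snd (snd h)))"
      have "(X has_derivative D) (at z)"
      proof (rule deriv_local[OF oU' zU'])
        show "((\<lambda>y. (fst (snd y) - \<sigma> * (T - fst y), snd (snd y))) has_derivative D) (at z)"
          unfolding D_def by (auto intro!: derivative_eq_intros simp: algebra_simps)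
        fix y assume y: "y \<in> U'"
        obtain t x1 x2 where yy: "y = (t, (x1, x2))" by (cases y) auto
        define w where "w = \<sigma> * x1 + t"
        have w: "0 \<le> t" "t \<le> T" "T \<le> w" using y yy by (auto simp: U'_def Uout_def w_def)
        have "X (t, (\<sigma>*(w-t), x2)) = X (T, (\<sigma>*(w-T), x2))"
          by (rule flow_const[OF T fl sig]) (use w in auto)
        moreover have "\<sigma>*(w-t) = x1" using ss by (simp add: w_def algebra_simps)
        ultimately have "X y = (\<sigma>*(w-T), x2)" using yy XT by simp
        moreover have "\<sigma>*(w-T) = x1 - \<sigma> * (T - t)" using ss by (simp add: w_def algebra_simps)
        ultimately show "(fst (snd y) - \<sigma> * (T - fst y), snd (snd y)) = X y" using yy by simp
      qed
      then show ?thesis using cond by (intro exI[of _ D]) (simp add: D_def spatial_jac_def)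
    qed
  qed
qed


theorem mainTheorem17:
  fixes T :: real
  assumes "T > 0"
  shows "Ve T a_ex = {z. z \<in> {0<..<T} \<times> UNIV \<and> \<bar>fst (snd z)\<bar> < T - fst z}
    \<and> (\<forall>lam. transport_flow T a_ex (XT_lam T lam))
    \<and> (\<exists>X Y. transport_flow T a_ex X \<and> transport_flow T a_ex Y \<and> (\<exists>z \<in> {0..T} \<times> UNIV. X z \<noteq> Y z))
    \<and> (\<forall>X. transport_flow T a_ex X \<longrightarrow>
          (AE z in lborel. z \<in> {0<..<T} \<times> UNIV \<longrightarrow>
             (\<exists>D. (X has_derivative D) (at z) \<and>
                  spatial_jac D = (if \<bar>fst (snd z)\<bar> \<ge> T - fst z then 1 else 0))))
    \<and> (\<forall>lam \<tau> t s x. 0 \<le> \<tau> \<and> \<tau> \<le> t \<and> t \<le> s \<and> s \<le> T \<longrightarrow>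
          X_lam lam s t (X_lam lam t \<tau> x) = X_lam lam s \<tau> x)"
  proof (intro conjI allI impI)
  show "Ve T a_ex = {z. z \<in> {0<..<T} \<times> UNIV \<and> \<bar>fst (snd z)\<bar> < T - fst z}"
    by (rule Ve_eq[OF assms])
  show "transport_flow T a_ex (XT_lam T lam)" for lam by (rule XT_flow[OF assms])
  show "\<exists>X Y. transport_flow T a_ex X \<and> transport_flow T a_ex Y \<and> (\<exists>z \<in> {0..T} \<times> UNIV. X z \<noteq> Y z)"
  proof (intro exI conjI bexI)
    show "transport_flow T a_ex (XT_lam T 0)" "transport_flow T a_ex (XT_lam T 1)" by (rule XT_flow[OF assms])+
    show "(0, (0, 0)) \<in> {0..T} \<times> (UNIV :: (real \<times> real) set)" using assms by auto
    show "XT_lam T 0 (0, (0, 0)) \<noteq> XT_lam T 1 (0, (0, 0))" using assms by (simp add: XT_lam_def pos_part_def)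
  qed
  show "AE z in lborel. z \<in> {0<..<T} \<times> UNIV \<longrightarrow>
             (\<exists>D. (X has_derivative D) (at z) \<and>
                  spatial_jac D = (if \<bar>fst (snd z)\<bar> \<ge> T - fst z then 1 else 0))"
    if "transport_flow T a_ex X" for X by (rule jac_part[OF assms that])
  show "X_lam lam s t (X_lam lam t \<tau> x) = X_lam lam s \<tau> x"
    if "0 \<le> \<tau> \<and> \<tau> \<le> t \<and> t \<le> s \<and> s \<le> T" for lam \<tau> t s x
    using that by (intro semigroup) auto
qed

end
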